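(* The family $\Sigma_n$ is $\left(\frac n4,\frac n4\right)$-spread.
   Context: $\Sigma_n$ is the set of permutations of $[n]$, each identified with its graph $\{(i,\sigma(i)):i\in[n]\}$, so $\Sigma_n\subset{[n]^2\choose n}$. For a family $\mathcal{F}$ of subsets of $[n]^2$ and $X\subset[n]^2$, $\mathcal{F}(X):=\{F\setminus X: X\subset F\in\mathcal{F}\}$. $\mathcal{F}$ is $r$-spread if $|\mathcal{F}(X)|\le r^{-|X|}|\mathcal{F}|$ for all $X\subset[n]^2$, and $(r,q)$-spread if $\mathcal{F}(A)$ is $r$-spread for every $A\subset[n]^2$ with $|A|\le q$. *)

theory Defs
  imports Complex_Main
begin

definition grid :: "nat \<Rightarrow> (nat \<times> nat) set" where
  "grid n = {1..n} \<times> {1..n}"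

definition perm_graphs :: "nat \<Rightarrow> (nat \<times> nat) set set" where
  "perm_graphs n = {{(i, s i) | i. i \<in> {1..n}} | s. bij_betw s {1..n} {1..n}}"

definition link :: "'a set set \<Rightarrow> 'a set \<Rightarrow> 'a set set" where
  "link F X = {A - X | A. A \<in> F \<and> X \<subseteq> A}"

definition spread :: "'a set \<Rightarrow> real \<Rightarrow> 'a set set \<Rightarrow> bool" where
  "spread V r F \<longleftrightarrow>
     (\<forall>X. X \<subseteq> V \<longrightarrow> real (card (link F X)) \<le> inverse r ^ card X * real (card F))"

definition spread2 :: "'a set \<Rightarrow> real \<Rightarrow> real \<Rightarrow> 'a set set \<Rightarrow> bool" where
  "spread2 V r q F \<longleftrightarrow>
     (\<forall>A. A \<subseteq> V \<and> real (card A) \<le> q \<longrightarrow> spread V r (link F A))"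

end

theory Submission
  imports Defs "HOL-Library.FuncSet"
begin


lemma pow_ratio: "real (Suc m) ^ m \<le> 3 * real m ^ m"
proof (cases "m = 0")
  case True then show ?thesis by simp
next
  case False
  have "(1 + 1 / real m) ^ m \<le> exp (1 / real m) ^ m"
    by (intro power_mono) (auto simp del: exp_ge_add_one_self intro: exp_ge_add_one_self)
  also have "\<dots> = exp 1" using False by (simp flip: exp_of_nat_mult)
  also have "\<dots> \<le> 3" by (rule exp_le)
  finally have h: "(1 + 1 / real m) ^ m \<le> 3" .
  have "real (Suc m) ^ m = real m ^ m * (1 + 1 / real m) ^ m"
    using False by (simp add: field_simps flip: power_mult_distrib)
  also have "\<dots> \<le> real m ^ m * 3" using h by (intro mult_left_mono) auto
  finally show ?thesis by simp
qed

lemma fact_lower: "(real m / 3) ^ m \<le> fact m"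
proof (induction m)
  case 0 then show ?case by simp
next
  case (Suc m)
  have "(real (Suc m) / 3) ^ Suc m = real (Suc m) / 3 * (real (Suc m) ^ m / 3 ^ m)"
    by (simp add: power_divide)
  also have "\<dots> \<le> real (Suc m) / 3 * (3 * real m ^ m / 3 ^ m)"
    using pow_ratio[of m] by (intro mult_left_mono divide_right_mono) auto
  also have "\<dots> = real (Suc m) * (real m / 3) ^ m" by (simp add: power_divide)
  also have "\<dots> \<le> real (Suc m) * fact m" using Suc by (intro mult_left_mono) auto
  also have "\<dots> = fact (Suc m)" by simp
  finally show ?case .
qed

lemma fact_shift: "k \<ge> c \<Longrightarrow> c \<ge> 0 \<Longrightarrow> c ^ x * fact k \<le> (fact (k + x) :: real)"
proof (induction x)
  case 0 then show ?case by simp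
next
  case (Suc x)
  have "c ^ Suc x * fact k = c * (c ^ x * fact k)" by simp
  also have "\<dots> \<le> real (Suc (k + x)) * fact (k + x)"
    using Suc by (intro mult_mono) auto
  also have "\<dots> = fact (k + Suc x)" by simp
  finally show ?case .
qed

lemma key_ineq:
  fixes c :: real
  assumes "c \<ge> 0" "3 * c \<le> real m" "x \<le> m"
  shows "c ^ x * fact (m - x) \<le> fact m"
proof (cases "real (m - x) \<ge> c")
  case True
  then show ?thesis using fact_shift[OF True assms(1), of x] assms(3) by simp
next
  case False
  have "fact (m - x) \<le> real (m - x) ^ (m - x)" using fact_le_power[of "m-x", where 'a=real] by simp
  also have "\<dots> \<le> c ^ (m - x)" using False by (intro power_mono) auto
  finally have "c ^ x * fact (m - x) \<le> c ^ x * c ^ (m - x)" using assms(1) by (intro mult_left_mono) auto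
  also have "\<dots> = c ^ m" using assms(3) by (simp flip: power_add)
  also have "\<dots> \<le> (real m / 3) ^ m" using assms by (intro power_mono) auto
  also have "\<dots> \<le> fact m" by (rule fact_lower)
  finally show ?thesis .
qed


definition matching :: "(nat \<times> nat) set \<Rightarrow> bool" where
  "matching B \<longleftrightarrow> (\<forall>p\<in>B. \<forall>q\<in>B. fst p = fst q \<longleftrightarrow> snd p = snd q)"

definition ext :: "nat \<Rightarrow> (nat \<times> nat) set \<Rightarrow> (nat \<times> nat) set set" where
  "ext n B = {G \<in> perm_graphs n. B \<subseteq> G}"

lemma graph_props:
  assumes "bij_betw s {1..n} {1..n}"
  shows "matching {(i, s i) | i. i \<in> {1..n}}" "{(i, s i) | i. i \<in> {1..n}} \<subseteq> grid n"
proof -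
  have inj: "inj_on s {1..n}" using assms bij_betw_def by blast
  show "matching {(i, s i) | i. i \<in> {1..n}}"
    unfolding matching_def using inj by (auto dest: inj_onD)
  show "{(i, s i) | i. i \<in> {1..n}} \<subseteq> grid n"
    unfolding grid_def using assms by (auto dest: bij_betwE)
qed

lemma ext_empty:
  assumes "\<not> (B \<subseteq> grid n \<and> matching B)"
  shows "ext n B = {}"
proof -
  { fix G assume "G \<in> ext n B"
    then obtain s where s: "bij_betw s {1..n} {1..n}" "G = {(i, s i) | i. i \<in> {1..n}}" "B \<subseteq> G"
      unfolding ext_def perm_graphs_def by auto
    from graph_props[OF s(1)] s(2,3) have "B \<subseteq> grid n \<and> matching B"
      unfolding matching_def by blast
    with assms have False by simp }
  then show ?thesis by blast
qed

lemma matching_card: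
  assumes "matching B" shows "card (fst ` B) = card B" "card (snd ` B) = card B"
proof -
  have "inj_on fst B" "inj_on snd B" using assms unfolding matching_def inj_on_def
    by (auto simp: prod_eq_iff)
  then show "card (fst ` B) = card B" "card (snd ` B) = card B" by (auto simp: card_image)
qed

lemma matching_card_le:
  assumes "matching B" "B \<subseteq> grid n" shows "card B \<le> n"
proof -
  have "fst ` B \<subseteq> {1..n}" using assms(2) unfolding grid_def by auto
  then have "card (fst ` B) \<le> n" using card_mono[of "{1..n}"] by fastforce
  then show ?thesis using matching_card[OF assms(1)] by simp
qed

lemma matching_the:
  assumes "matching B" "(i, j) \<in> B" shows "(THE j. (i, j) \<in> B) = j"
  using assms unfolding matching_def by (intro the_equality) force+



lemma count_ext:
  assumes Bg: "B \<subseteq> grid n" and mB: "matching B"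
  shows "card (ext n B) = fact (n - card B)"
proof -
  define D where "D = fst ` B"
  define R where "R = snd ` B"
  define U where "U = {1..n} - D"
  define V where "V = {1..n} - R"
  define bv where "bv = (\<lambda>i. THE j. (i, j) \<in> B)"
  define \<Phi> where "\<Phi> = (\<lambda>f. B \<union> (\<lambda>i. (i, f i)) ` U)"
  define F where "F = {f \<in> U \<rightarrow>\<^sub>E V. inj_on f U}"
  have DS: "D \<subseteq> {1..n}" "R \<subseteq> {1..n}" using Bg unfolding D_def R_def grid_def by auto
  have cU: "card U = n - card B" unfolding U_def using DS matching_card[OF mB]
    by (simp add: card_Diff_subset D_def finite_subset)
  have cV: "card V = n - card B" unfolding V_def using DS matching_card[OF mB]
    by (simp add: card_Diff_subset R_def finite_subset)
  have bvB: "(i, bv i) \<in> B" if "i \<in> D" for i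
    using that matching_the[OF mB] unfolding D_def bv_def by force
  have bvEq: "bv i = j" if "(i, j) \<in> B" for i j
    using matching_the[OF mB that] unfolding bv_def .
  have cF: "card F = fact (n - card B)"
  proof -
    have "card F = card V ^ (card U - card U) * prod ((-) (card V)) {0 ..< card U}"
      unfolding F_def by (rule card_inj_on_subset_funcset) (auto simp: V_def U_def)
    also have "\<dots> = fact (n - card B)" using cU cV by (simp add: fact_prod_rev)
    finally show ?thesis .
  qed
  have injPhi: "inj_on \<Phi> F"
  proof (rule inj_onI)
    fix f g assume f: "f \<in> F" and g: "g \<in> F" and eq: "\<Phi> f = \<Phi> g"
    show "f = g"
    proof (rule extensionalityI[of f U g])
      show "f \<in> extensional U" "g \<in> extensional U" using f g unfolding F_def PiE_def by auto
      fix i assume i: "i \<in> U"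
      then have "(i, f i) \<in> \<Phi> g" using eq unfolding \<Phi>_def by auto
      moreover have "(i, f i) \<notin> B" using i unfolding U_def D_def by force
      ultimately show "f i = g i" unfolding \<Phi>_def by auto
    qed
  qed
  have img: "\<Phi> ` F = ext n B"
  proof
    show "\<Phi> ` F \<subseteq> ext n B"
    proof
      fix G assume "G \<in> \<Phi> ` F"
      then obtain f where f: "f \<in> F" and G: "G = \<Phi> f" by auto
      define s where "s = (\<lambda>i. if i \<in> D then bv i else f i)"
      have fUV: "f i \<in> V" if "i \<in> U" for i using f that unfolding F_def by auto
      have injf: "inj_on f U" using f unfolding F_def by auto
      have sub: "s ` {1..n} \<subseteq> {1..n}"
      proof
        fix y assume "y \<in> s ` {1..n}"
        then obtain i where i: "i \<in> {1..n}" "y = s i" by auto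
        show "y \<in> {1..n}"
        proof (cases "i \<in> D")
          case True then show ?thesis using bvB[OF True] Bg i unfolding s_def grid_def by auto
        next
          case False then show ?thesis using fUV[of i] i unfolding s_def U_def V_def by auto
        qed
      qed
      have inj: "inj_on s {1..n}"
      proof (rule inj_onI)
        fix i k assume i: "i \<in> {1..n}" and k: "k \<in> {1..n}" and e: "s i = s k"
        show "i = k"
        proof (cases "i \<in> D"; cases "k \<in> D")
          assume a: "i \<in> D" "k \<in> D"
          have "(i, bv i) \<in> B" "(k, bv k) \<in> B" using bvB a by auto
          moreover have "bv i = bv k" using e a unfolding s_def by simp
          ultimately show ?thesis using mB unfolding matching_def by fastforce
        next
          assume a: "i \<in> D" "k \<notin> D"
          then have "s i \<in> R" using bvB unfolding s_def R_def by force
          moreover have "s k \<in> V" using a k fUV unfolding s_def U_def by auto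
          ultimately show ?thesis using e unfolding V_def by auto
        next
          assume a: "i \<notin> D" "k \<in> D"
          then have "s k \<in> R" using bvB unfolding s_def R_def by force
          moreover have "s i \<in> V" using a i fUV unfolding s_def U_def by auto
          ultimately show ?thesis using e unfolding V_def by auto
        next
          assume a: "i \<notin> D" "k \<notin> D"
          then show ?thesis using e injf i k unfolding s_def U_def by (auto dest: inj_onD)
        qed
      qed
      have bij: "bij_betw s {1..n} {1..n}"
        using endo_inj_surj[OF _ sub inj] inj unfolding bij_betw_def by auto
      have Gs: "G = {(i, s i) | i. i \<in> {1..n}}"
      proof
        show "G \<subseteq> {(i, s i) | i. i \<in> {1..n}}"
        proof
          fix p assume "p \<in> G"
          then consider "p \<in> B" | i where "i \<in> U" "p = (i, f i)" unfolding G \<Phi>_def by auto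
          then show "p \<in> {(i, s i) | i. i \<in> {1..n}}"
          proof cases
            case 1
            then obtain i j where p: "p = (i, j)" "(i, j) \<in> B" by (cases p) auto
            then have "i \<in> D" "i \<in> {1..n}" using Bg unfolding D_def grid_def by force+
            then show ?thesis using p bvEq[OF p(2)] unfolding s_def by auto
          next
            case 2 then show ?thesis unfolding s_def U_def by auto
          qed
        qed
        show "{(i, s i) | i. i \<in> {1..n}} \<subseteq> G"
        proof
          fix p assume "p \<in> {(i, s i) | i. i \<in> {1..n}}"
          then obtain i where i: "i \<in> {1..n}" "p = (i, s i)" by auto
          show "p \<in> G"
          proof (cases "i \<in> D")
            case True then show ?thesis using bvB i unfolding G \<Phi>_def s_def by auto
          next
            case False then show ?thesis using i unfolding G \<Phi>_def s_def U_def by auto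
          qed
        qed
      qed
      have "B \<subseteq> G" unfolding G \<Phi>_def by auto
      then show "G \<in> ext n B" using bij Gs unfolding ext_def perm_graphs_def by auto
    qed
  next
    show "ext n B \<subseteq> \<Phi> ` F"
    proof
      fix G assume "G \<in> ext n B"
      then obtain s where s: "bij_betw s {1..n} {1..n}" and G: "G = {(i, s i) | i. i \<in> {1..n}}"
        and BG: "B \<subseteq> G"
        unfolding ext_def perm_graphs_def by auto
      have inj: "inj_on s {1..n}" using s bij_betw_def by blast
      have sn: "s i \<in> {1..n}" if "i \<in> {1..n}" for i using s that by (auto dest: bij_betwE)
      have Bs: "j = s i" "i \<in> {1..n}" if "(i, j) \<in> B" for i j using that BG G by auto
      define f where "f = restrict s U"
      have sR: "s i \<notin> R" if "i \<in> U" for i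
      proof
        assume "s i \<in> R"
        then obtain i' where "(i', s i) \<in> B" unfolding R_def by force
        then have "s i' = s i" "i' \<in> {1..n}" "i' \<in> D" using Bs unfolding D_def by force+
        then show False using inj that unfolding U_def by (auto dest: inj_onD)
      qed
      have fF: "f \<in> F" unfolding F_def f_def
        using sR sn inj by (auto simp: U_def V_def intro: inj_on_subset)
      have "\<Phi> f = G"
      proof
        show "\<Phi> f \<subseteq> G" using BG unfolding \<Phi>_def f_def G U_def by auto
        show "G \<subseteq> \<Phi> f"
        proof
          fix p assume "p \<in> G"
          then obtain i where i: "i \<in> {1..n}" "p = (i, s i)" using G by auto
          show "p \<in> \<Phi> f"
          proof (cases "i \<in> D")
            case True
            then obtain j where "(i, j) \<in> B" unfolding D_def by force
            then show ?thesis using Bs i unfolding \<Phi>_def by auto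
          next
            case False then show ?thesis using i unfolding \<Phi>_def f_def U_def by auto
          qed
        qed
      qed
      then show "G \<in> \<Phi> ` F" using fF by blast
    qed
  qed
  have "card (ext n B) = card F" using card_image[OF injPhi] img by simp
  then show ?thesis using cF by simp
qed



lemma link_alt: "link F X = (\<lambda>G. G - X) ` {G \<in> F. X \<subseteq> G}" unfolding link_def by auto

lemma link_link_disj: "A \<inter> X = {} \<Longrightarrow> link (link F A) X = link F (A \<union> X)"
proof -
  assume d: "A \<inter> X = {}"
  have "link (link F A) X = (\<lambda>G. G - X) ` {B \<in> (\<lambda>G. G - A) ` {G \<in> F. A \<subseteq> G}. X \<subseteq> B}"
    unfolding link_alt ..
  also have "{B \<in> (\<lambda>G. G - A) ` {G \<in> F. A \<subseteq> G}. X \<subseteq> B} = (\<lambda>G. G - A) ` {G \<in> F. A \<union> X \<subseteq> G}"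
    using d by blast
  also have "(\<lambda>G. G - X) ` ((\<lambda>G. G - A) ` {G \<in> F. A \<union> X \<subseteq> G}) = (\<lambda>G. G - (A \<union> X)) ` {G \<in> F. A \<union> X \<subseteq> G}"
    by (simp add: image_image Diff_Un Int_commute Diff_Int_distrib2 set_diff_eq)
  also have "\<dots> = link F (A \<union> X)" unfolding link_alt ..
  finally show ?thesis .
qed
lemma card_link: "card (link F X) = card {G \<in> F. X \<subseteq> G}"
proof -
  have "inj_on (\<lambda>G. G - X) {G \<in> F. X \<subseteq> G}"
  proof (rule inj_onI)
    fix G H assume "G \<in> {G \<in> F. X \<subseteq> G}" "H \<in> {G \<in> F. X \<subseteq> G}" "G - X = H - X"
    then have "G = (G - X) \<union> X" "H = (H - X) \<union> X" by auto
    then show "G = H" using \<open>G - X = H - X\<close> by simp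
  qed
  then show ?thesis unfolding link_alt by (simp add: card_image)
qed

lemma link_link_nondisj: "A \<inter> X \<noteq> {} \<Longrightarrow> link (link F A) X = {}"
  unfolding link_def by auto

theorem lemma12:
  fixes n :: nat
  shows "spread2 (grid n) (real n / 4) (real n / 4) (perm_graphs n)"
  unfolding spread2_def spread_def
proof (intro allI impI, elim conjE)
  fix A X assume Ag: "A \<subseteq> grid n" and Ac: "real (card A) \<le> real n / 4" and Xg: "X \<subseteq> grid n"
  have fg: "finite (grid n)" unfolding grid_def by simp
  have fA: "finite A" and fX: "finite X" using Ag Xg fg finite_subset by auto
  show "real (card (link (link (perm_graphs n) A) X))
        \<le> inverse (real n / 4) ^ card X * real (card (link (perm_graphs n) A))"
  proof (cases "A \<inter> X = {}")
    case False then show ?thesis by (simp add: link_link_nondisj)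
  next
    case disj: True
    have L: "card (link (link (perm_graphs n) A) X) = card (ext n (A \<union> X))"
      using link_link_disj[OF disj] card_link[of "perm_graphs n" "A \<union> X"] unfolding ext_def by simp
    have R: "card (link (perm_graphs n) A) = card (ext n A)"
      unfolding ext_def by (rule card_link)
    show ?thesis
    proof (cases "matching (A \<union> X)")
      case False
      then have "ext n (A \<union> X) = {}" by (intro ext_empty) auto
      then show ?thesis using L by simp
    next
      case m: True
      have mA: "matching A" using m unfolding matching_def by blast
      have cAX: "card (A \<union> X) = card A + card X" using fA fX disj by (simp add: card_Un_disjoint)
      have le: "card A + card X \<le> n" using matching_card_le[OF m] Ag Xg cAX by auto
      have L2: "card (ext n (A \<union> X)) = fact (n - card A - card X)"
        using count_ext[OF _ m] Ag Xg cAX by simp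
      have R2: "card (ext n A) = fact (n - card A)" using count_ext[OF Ag mA] .
      show ?thesis
      proof (cases "n = 0")
        case True
        then have "X = {}" using Xg unfolding grid_def by auto
        then show ?thesis using L R disj by simp
      next
        case False
        define c where "c = real n / 4"
        have c0: "c > 0" using False unfolding c_def by simp
        have "c ^ card X * fact (n - card A - card X) \<le> (fact (n - card A) :: real)"
          using key_ineq[of c "n - card A" "card X"] c0 Ac le unfolding c_def
          by (simp add: of_nat_diff diff_diff_left)
        then have "fact (n - card A - card X) \<le> inverse c ^ card X * (fact (n - card A) :: real)"
          using c0 by (simp add: power_inverse field_simps)
        then show ?thesis using L R L2 R2 unfolding c_def by simp
      qed
    qed
  qed
qed

end
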